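(* Assume condition (G) holds. Let $\beta\in(0,1)$. Let $\widehat k\ge 0$ be any (possibly data-dependent) random variable and let $\widehat\pi=\widehat\pi_{\mathrm{RW}}(\widehat k)$ be any random element of $\Pi$ satisfying $$\widehat\pi\in\arg\max_{\pi\in\Pi}\bigl\{\widehat V(\pi)-\widehat k\,\widehat s(\pi)\bigr\}.$$ Then, with probability at least $1-2\beta-2r_n$, $$V_{\max}-V(\widehat\pi)\;\le\;\frac{\underline\sigma_{\Pi_0}}{\sqrt n}\bigl\{q_{1-\beta,\Pi_0}+\widehat k\bigr\}+\frac{\bar\sigma_\Pi}{\sqrt n}\bigl\{(q_{1-\beta,\Pi}-\widehat k)_+\bigr\},$$ where $x_+=\max\{x,0\}$.
   Context: Setting. $\Pi$ is a finite nonempty set of policies, $n$ is a positive integer (notional sample size). $V:\Pi\to\mathbb R$ is a deterministic (true) welfare function. On a probability space, $(\widehat V(\pi))_{\pi\in\Pi}$ are real random variables (welfare estimates) and $(\widehat s(\pi))_{\pi\in\Pi}$ are strictly positive random variables (estimated standard errors). Define the normalized estimation error $\widehat Z_\pi=(\widehat V(\pi)-V(\pi))/\widehat s(\pi)$. Let $(Z_\pi)_{\pi\in\Pi}$ be a centered Gaussian vector with $\mathrm{Var}(Z_\pi)=1$ for every $\pi$. Let $\mathcal A$ be the collection of rectangles in $\mathbb R^{\Pi}$, i.e. products $\prod_{\pi\in\Pi}I_\pi$ of (possibly unbounded) intervals. Condition (G): there is a constant $r_n\ge0$ such that $\bigl|\Pr((\widehat Z_\pi)_{\pi\in\Pi}\in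 A)-\Pr((Z_\pi)_{\pi\in\Pi}\in A)\bigr|\le r_n$ for all $A\in\mathcal A$. Quantiles: for a real random variable $X$ and $\tau\in(0,1)$, the $\tau$-quantile is $\inf\{x:\Pr(X\le x)\ge\tau\}$. For nonempty $K\subseteq\Pi$, $q_{\tau,K}$ denotes the $\tau$-quantile of $\max_{\pi\in K}Z_\pi$. Further notation: $V_{\max}=\max_{\pi\in\Pi}V(\pi)$, $\Pi_0=\{\pi\in\Pi:V(\pi)=V_{\max}\}$, $\bar\sigma_\Pi=\sqrt n\max_{\pi\in\Pi}\widehat s(\pi)$, $\underline\sigma_{\Pi_0}=\sqrt n\min_{\pi\in\Pi_0}\widehat s(\pi)$. *)

theory Defs
  imports "HOL-Probability.Probability"
begin

definition real_gaussian :: "'a measure \<Rightarrow> ('a \<Rightarrow> real) \<Rightarrow> bool" where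
  "real_gaussian N X \<longleftrightarrow> X \<in> borel_measurable N \<and>
     ((\<exists>\<mu> \<sigma>. \<sigma> > 0 \<and> distributed N lborel X (normal_density \<mu> \<sigma>)) \<or>
      (\<exists>c. AE x in N. X x = c))"

definition centered_unit_gaussian_vector ::
    "'a measure \<Rightarrow> 'p set \<Rightarrow> ('p \<Rightarrow> 'a \<Rightarrow> real) \<Rightarrow> bool" where
  "centered_unit_gaussian_vector N P Z \<longleftrightarrow>
     (\<forall>\<pi>\<in>P. Z \<pi> \<in> borel_measurable N) \<and>
     (\<forall>a :: 'p \<Rightarrow> real. real_gaussian N (\<lambda>\<omega>. \<Sum>\<pi>\<in>P. a \<pi> * Z \<pi> \<omega>)) \<and>
     (\<forall>\<pi>\<in>P. integrable N (Z \<pi>) \<and> integral\<^sup>L N (Z \<pi>) = 0) \<and>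
     (\<forall>\<pi>\<in>P. integrable N (\<lambda>\<omega>. (Z \<pi> \<omega>)\<^sup>2) \<and> integral\<^sup>L N (\<lambda>\<omega>. (Z \<pi> \<omega>)\<^sup>2) = 1)"

definition quantile :: "'a measure \<Rightarrow> ('a \<Rightarrow> real) \<Rightarrow> real \<Rightarrow> real" where
  "quantile N X \<tau> = Inf {x. measure N {\<omega>\<in>space N. X \<omega> \<le> x} \<ge> \<tau>}"

definition qmax :: "'a measure \<Rightarrow> ('p \<Rightarrow> 'a \<Rightarrow> real) \<Rightarrow> real \<Rightarrow> 'p set \<Rightarrow> real" where
  "qmax N Z \<tau> K = quantile N (\<lambda>\<omega>. Max ((\<lambda>\<pi>. Z \<pi> \<omega>) ` K)) \<tau>"

definition condition_G ::
    "'a measure \<Rightarrow> ('p \<Rightarrow> 'a \<Rightarrow> real) \<Rightarrow> 'b measure \<Rightarrow> ('p \<Rightarrow> 'b \<Rightarrow> real) \<Rightarrow> 'p set \<Rightarrow> real \<Rightarrow> bool" where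
  "condition_G M Zhat N Z P r \<longleftrightarrow>
     (\<forall>I :: 'p \<Rightarrow> real set. (\<forall>\<pi>\<in>P. is_interval (I \<pi>)) \<longrightarrow>
        \<bar>measure M {\<omega>\<in>space M. \<forall>\<pi>\<in>P. Zhat \<pi> \<omega> \<in> I \<pi>}
         - measure N {\<omega>\<in>space N. \<forall>\<pi>\<in>P. Z \<pi> \<omega> \<in> I \<pi>}\<bar> \<le> r)"

end

theory Submission
  imports Defs
begin
lemma iexp_split: "iexp v = complex_of_real (cos v) + \<i> * complex_of_real (sin v)"
  by (simp add: cos_of_real exp_Euler sin_of_real)
lemma iexp_add: "iexp (u + v) = iexp u * iexp v"
  by (simp add: distrib_left exp_add)
lemma cos_as_iexp: "complex_of_real (cos v) = (iexp v + iexp (-v)) / 2"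
  using iexp_split[of v] iexp_split[of "-v"] by simp
lemma sin_as_iexp: "complex_of_real (sin v) = (iexp v - iexp (-v)) / (2 * \<i>)"
  using iexp_split[of v] iexp_split[of "-v"] by (simp add: field_simps)
lemma cos_iexp: "complex_of_real (cos v) * iexp u = (iexp (u + v) + iexp (u - v)) / 2"
  unfolding diff_conv_add_uminus iexp_add cos_as_iexp
  by (simp add: algebra_simps)
lemma sin_iexp: "complex_of_real (sin v) * iexp u = (iexp (u + v) - iexp (u - v)) / (2 * \<i>)"
  unfolding diff_conv_add_uminus iexp_add sin_as_iexp
  by (simp add: algebra_simps)

lemma fourier_weighted_eq:
  fixes M1 :: "'a measure" and M2 :: "'b measure" and f :: "real \<Rightarrow> real"
  assumes fm1: "finite_measure M1" and fm2: "finite_measure M2"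
   and [measurable]: "Ua \<in> borel_measurable M1" "Ub \<in> borel_measurable M2"
     "wa \<in> borel_measurable M1" "wb \<in> borel_measurable M2"
   and wa: "\<forall>\<omega>\<in>space M1. 0 \<le> wa \<omega> \<and> wa \<omega> \<le> C"
   and wb: "\<forall>\<omega>\<in>space M2. 0 \<le> wb \<omega> \<and> wb \<omega> \<le> C"
   and eq: "\<forall>s. (\<integral>\<omega>. wa \<omega> *\<^sub>R iexp (s * Ua \<omega>) \<partial>M1) = (\<integral>\<omega>. wb \<omega> *\<^sub>R iexp (s * Ub \<omega>) \<partial>M2)"
   and f[measurable]: "f \<in> borel_measurable borel"
  shows "(\<integral>\<omega>. wa \<omega> * f (Ua \<omega>) \<partial>M1) = (\<integral>\<omega>. wb \<omega> * f (Ub \<omega>) \<partial>M2)"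
proof -
  have i1: "integrable M1 wa"
    using wa by (intro finite_measure.integrable_const_bound[OF fm1, where B=C]) auto
  have i2: "integrable M2 wb"
    using wb by (intro finite_measure.integrable_const_bound[OF fm2, where B=C]) auto
  define m where "m = integral\<^sup>L M1 wa"
  have "complex_of_real (integral\<^sup>L M1 wa) = complex_of_real (integral\<^sup>L M2 wb)"
    using eq[rule_format, of 0] by (simp add: scaleR_conv_of_real)
  hence m2: "integral\<^sup>L M2 wb = m" unfolding m_def by simp
  have m0: "m \<ge> 0" unfolding m_def using wa by (intro integral_nonneg_AE) auto
  show ?thesis
  proof (cases "m = 0")
    case True
    have "AE x in M1. wa x = 0"
      using integral_nonneg_eq_0_iff_AE[OF i1] wa True m_def by auto
    hence a: "(\<integral>\<omega>. wa \<omega> * f (Ua \<omega>) \<partial>M1) = 0"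
      by (subst integral_cong_AE[where g="\<lambda>_. 0"]) auto
    have "AE x in M2. wb x = 0"
      using integral_nonneg_eq_0_iff_AE[OF i2] wb True m2 by auto
    hence b: "(\<integral>\<omega>. wb \<omega> * f (Ub \<omega>) \<partial>M2) = 0"
      by (subst integral_cong_AE[where g="\<lambda>_. 0"]) auto
    show ?thesis using a b by simp
  next
    case False
    hence mpos: "m > 0" using m0 by simp
    define \<mu>1 where "\<mu>1 = distr (density M1 (\<lambda>\<omega>. wa \<omega> / m)) borel Ua"
    define \<mu>2 where "\<mu>2 = distr (density M2 (\<lambda>\<omega>. wb \<omega> / m)) borel Ub"
    have ps1: "prob_space (density M1 (\<lambda>\<omega>. wa \<omega> / m))"
    proof (rule prob_spaceI)
      have "emeasure (density M1 (\<lambda>\<omega>. wa \<omega> / m)) (space (density M1 (\<lambda>\<omega>. wa \<omega> / m)))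
          = (\<integral>\<^sup>+\<omega>. ennreal (wa \<omega> / m) \<partial>M1)"
        by (simp add: emeasure_density nn_integral_density)
      also have "\<dots> = ennreal (\<integral>\<omega>. wa \<omega> / m \<partial>M1)"
        using wa mpos i1 by (intro nn_integral_eq_integral) auto
      also have "\<dots> = 1" using mpos m_def by simp
      finally show "emeasure (density M1 (\<lambda>\<omega>. wa \<omega> / m)) (space (density M1 (\<lambda>\<omega>. wa \<omega> / m))) = 1" .
    qed
    have ps2: "prob_space (density M2 (\<lambda>\<omega>. wb \<omega> / m))"
    proof (rule prob_spaceI)
      have "emeasure (density M2 (\<lambda>\<omega>. wb \<omega> / m)) (space (density M2 (\<lambda>\<omega>. wb \<omega> / m)))
          = (\<integral>\<^sup>+\<omega>. ennreal (wb \<omega> / m) \<partial>M2)"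
        by (simp add: emeasure_density nn_integral_density)
      also have "\<dots> = ennreal (\<integral>\<omega>. wb \<omega> / m \<partial>M2)"
        using wb mpos i2 by (intro nn_integral_eq_integral) auto
      also have "\<dots> = 1" using mpos m2 by simp
      finally show "emeasure (density M2 (\<lambda>\<omega>. wb \<omega> / m)) (space (density M2 (\<lambda>\<omega>. wb \<omega> / m))) = 1" .
    qed
    have rd1: "real_distribution \<mu>1" unfolding \<mu>1_def
      by (rule prob_space.real_distribution_distr[OF ps1]) simp
    have rd2: "real_distribution \<mu>2" unfolding \<mu>2_def
      by (rule prob_space.real_distribution_distr[OF ps2]) simp
    have gen1: "integral\<^sup>L \<mu>1 g = (\<integral>\<omega>. (wa \<omega> / m) *\<^sub>R g (Ua \<omega>) \<partial>M1)"
      if [measurable]: "g \<in> borel_measurable borel" for g :: "real \<Rightarrow> 'c::{banach, second_countable_topology}"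
      unfolding \<mu>1_def using wa mpos
      by (subst integral_distr) (auto simp: integral_density)
    have gen2: "integral\<^sup>L \<mu>2 g = (\<integral>\<omega>. (wb \<omega> / m) *\<^sub>R g (Ub \<omega>) \<partial>M2)"
      if [measurable]: "g \<in> borel_measurable borel" for g :: "real \<Rightarrow> 'c::{banach, second_countable_topology}"
      unfolding \<mu>2_def using wb mpos
      by (subst integral_distr) (auto simp: integral_density)
    have "char \<mu>1 = char \<mu>2"
    proof
      fix s
      have "char \<mu>1 s = (\<integral>\<omega>. (wa \<omega> / m) *\<^sub>R iexp (s * Ua \<omega>) \<partial>M1)"
        unfolding char_def by (rule gen1) auto
      also have "\<dots> = (1/m) *\<^sub>R (\<integral>\<omega>. wa \<omega> *\<^sub>R iexp (s * Ua \<omega>) \<partial>M1)"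
        by (subst integral_scaleR_right[symmetric]) (auto intro!: Bochner_Integration.integral_cong)
      also have "\<dots> = (1/m) *\<^sub>R (\<integral>\<omega>. wb \<omega> *\<^sub>R iexp (s * Ub \<omega>) \<partial>M2)"
        using eq by simp
      also have "\<dots> = (\<integral>\<omega>. (wb \<omega> / m) *\<^sub>R iexp (s * Ub \<omega>) \<partial>M2)"
        by (subst integral_scaleR_right[symmetric]) (auto intro!: Bochner_Integration.integral_cong)
      also have "\<dots> = char \<mu>2 s"
        unfolding char_def by (rule gen2[symmetric]) auto
      finally show "char \<mu>1 s = char \<mu>2 s" .
    qed
    hence "\<mu>1 = \<mu>2" using Levy_uniqueness rd1 rd2 by blast
    hence "integral\<^sup>L \<mu>1 f = integral\<^sup>L \<mu>2 f" by simp
    hence "(\<integral>\<omega>. (1/m) * (wa \<omega> * f (Ua \<omega>)) \<partial>M1) = (\<integral>\<omega>. (1/m) * (wb \<omega> * f (Ub \<omega>)) \<partial>M2)"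
      using gen1[OF f] gen2[OF f] by simp
    thus ?thesis using mpos by simp
  qed
qed

lemma fourier_pair_eq:
  fixes M1 :: "'a measure" and M2 :: "'b measure"
  assumes fm1: "finite_measure M1" and fm2: "finite_measure M2"
   and [measurable]: "U1 \<in> borel_measurable M1" "U2 \<in> borel_measurable M2"
     "V1 \<in> borel_measurable M1" "V2 \<in> borel_measurable M2"
   and eq: "\<forall>s t. (\<integral>\<omega>. iexp (s * U1 \<omega> + t * V1 \<omega>) \<partial>M1) = (\<integral>\<omega>. iexp (s * U2 \<omega> + t * V2 \<omega>) \<partial>M2)"
   and B[measurable]: "B \<in> sets borel"
  shows "(\<integral>\<omega>. indicator B (U1 \<omega>) *\<^sub>R iexp (V1 \<omega>) \<partial>M1) = (\<integral>\<omega>. indicator B (U2 \<omega>) *\<^sub>R iexp (V2 \<omega>) \<partial>M2)"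
proof -
  have ci1: "integrable M1 h" if "h \<in> borel_measurable M1" "\<forall>\<omega>. norm (h \<omega>) \<le> 2" for h :: "'a \<Rightarrow> complex"
    using that by (intro finite_measure.integrable_const_bound[OF fm1, where B=2]) auto
  have ci2: "integrable M2 h" if "h \<in> borel_measurable M2" "\<forall>\<omega>. norm (h \<omega>) \<le> 2" for h :: "'b \<Rightarrow> complex"
    using that by (intro finite_measure.integrable_const_bound[OF fm2, where B=2]) auto
  have ri1: "integrable M1 h" if "h \<in> borel_measurable M1" "\<forall>\<omega>. norm (h \<omega>) \<le> 2" for h :: "'a \<Rightarrow> real"
    using that by (intro finite_measure.integrable_const_bound[OF fm1, where B=2]) auto
  have ri2: "integrable M2 h" if "h \<in> borel_measurable M2" "\<forall>\<omega>. norm (h \<omega>) \<le> 2" for h :: "'b \<Rightarrow> real"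
    using that by (intro finite_measure.integrable_const_bound[OF fm2, where B=2]) auto
  have ie1: "integrable M1 (\<lambda>\<omega>. iexp (s * U1 \<omega> + t * V1 \<omega>))" for s t
    by (rule ci1) auto
  have ie2: "integrable M2 (\<lambda>\<omega>. iexp (s * U2 \<omega> + t * V2 \<omega>))" for s t
    by (rule ci2) auto
  have ptc: "(1 + cos v) *\<^sub>R iexp u = iexp (u + 0 * v) + (iexp (u + 1 * v) + iexp (u + (-1) * v))/2" for u v
    using cos_iexp[of v u] by (simp add: scaleR_conv_of_real distrib_right)
  have pts: "(1 + sin v) *\<^sub>R iexp u = iexp (u + 0 * v) + (iexp (u + 1 * v) - iexp (u + (-1) * v))/(2*\<i>)" for u v
    using sin_iexp[of v u] by (simp add: scaleR_conv_of_real distrib_right)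
  have lc1: "(\<integral>\<omega>. (1 + cos (V1 \<omega>)) *\<^sub>R iexp (s * U1 \<omega>) \<partial>M1) =
     (\<integral>\<omega>. iexp (s * U1 \<omega> + 0 * V1 \<omega>) \<partial>M1) + ((\<integral>\<omega>. iexp (s * U1 \<omega> + 1 * V1 \<omega>) \<partial>M1) + (\<integral>\<omega>. iexp (s * U1 \<omega> + (-1) * V1 \<omega>) \<partial>M1)) / 2" for s
    unfolding ptc
    apply (subst Bochner_Integration.integral_add)
      apply (rule ie1)
     apply (intro integrable_divide Bochner_Integration.integrable_add ie1)
    apply (subst integral_divide_zero)
    apply (subst Bochner_Integration.integral_add)
      apply (rule ie1)
     apply (rule ie1)
    apply (rule refl)
    done
  have lc2: "(\<integral>\<omega>. (1 + cos (V2 \<omega>)) *\<^sub>R iexp (s * U2 \<omega>) \<partial>M2) =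
     (\<integral>\<omega>. iexp (s * U2 \<omega> + 0 * V2 \<omega>) \<partial>M2) + ((\<integral>\<omega>. iexp (s * U2 \<omega> + 1 * V2 \<omega>) \<partial>M2) + (\<integral>\<omega>. iexp (s * U2 \<omega> + (-1) * V2 \<omega>) \<partial>M2)) / 2" for s
    unfolding ptc
    apply (subst Bochner_Integration.integral_add)
      apply (rule ie2)
     apply (intro integrable_divide Bochner_Integration.integrable_add ie2)
    apply (subst integral_divide_zero)
    apply (subst Bochner_Integration.integral_add)
      apply (rule ie2)
     apply (rule ie2)
    apply (rule refl)
    done
  have ls1: "(\<integral>\<omega>. (1 + sin (V1 \<omega>)) *\<^sub>R iexp (s * U1 \<omega>) \<partial>M1) =
     (\<integral>\<omega>. iexp (s * U1 \<omega> + 0 * V1 \<omega>) \<partial>M1) + ((\<integral>\<omega>. iexp (s * U1 \<omega> + 1 * V1 \<omega>) \<partial>M1) - (\<integral>\<omega>. iexp (s * U1 \<omega> + (-1) * V1 \<omega>) \<partial>M1)) / (2*\<i>)" for s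
    unfolding pts
    apply (subst Bochner_Integration.integral_add)
      apply (rule ie1)
     apply (intro integrable_divide Bochner_Integration.integrable_diff ie1)
    apply (subst integral_divide_zero)
    apply (subst Bochner_Integration.integral_diff)
      apply (rule ie1)
     apply (rule ie1)
    apply (rule refl)
    done
  have ls2: "(\<integral>\<omega>. (1 + sin (V2 \<omega>)) *\<^sub>R iexp (s * U2 \<omega>) \<partial>M2) =
     (\<integral>\<omega>. iexp (s * U2 \<omega> + 0 * V2 \<omega>) \<partial>M2) + ((\<integral>\<omega>. iexp (s * U2 \<omega> + 1 * V2 \<omega>) \<partial>M2) - (\<integral>\<omega>. iexp (s * U2 \<omega> + (-1) * V2 \<omega>) \<partial>M2)) / (2*\<i>)" for s
    unfolding pts
    apply (subst Bochner_Integration.integral_add)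
      apply (rule ie2)
     apply (intro integrable_divide Bochner_Integration.integrable_diff ie2)
    apply (subst integral_divide_zero)
    apply (subst Bochner_Integration.integral_diff)
      apply (rule ie2)
     apply (rule ie2)
    apply (rule refl)
    done
  have e0: "(\<integral>\<omega>. (1::real) * indicator B (U1 \<omega>) \<partial>M1) = (\<integral>\<omega>. 1 * indicator B (U2 \<omega>) \<partial>M2)"
    by (rule fourier_weighted_eq[OF fm1 fm2, where C=2 and wa="\<lambda>_. 1" and wb="\<lambda>_. 1" and f="indicator B" and Ua=U1 and Ub=U2])
       (use eq[rule_format, of _ 0] in auto)
  have cpos: "0 \<le> 1 + cos x" "0 \<le> 1 + sin x" for x :: real
    using cos_ge_minus_one[of x] sin_ge_minus_one[of x] by linarith+
  have hc: "\<forall>s. (\<integral>\<omega>. (1 + cos (V1 \<omega>)) *\<^sub>R iexp (s * U1 \<omega>) \<partial>M1) = (\<integral>\<omega>. (1 + cos (V2 \<omega>)) *\<^sub>R iexp (s * U2 \<omega>) \<partial>M2)"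
    unfolding lc1 lc2 by (simp only: eq[rule_format] simp_thms)
  have ec: "(\<integral>\<omega>. (1 + cos (V1 \<omega>)) * indicator B (U1 \<omega>) \<partial>M1) = (\<integral>\<omega>. (1 + cos (V2 \<omega>)) * indicator B (U2 \<omega>) \<partial>M2)"
    by (rule fourier_weighted_eq[OF fm1 fm2, where C=2 and wa="\<lambda>\<omega>. 1 + cos (V1 \<omega>)" and wb="\<lambda>\<omega>. 1 + cos (V2 \<omega>)" and f="indicator B" and Ua=U1 and Ub=U2, OF _ _ _ _ _ _ hc])
       (auto simp: cpos)
  have hs: "\<forall>s. (\<integral>\<omega>. (1 + sin (V1 \<omega>)) *\<^sub>R iexp (s * U1 \<omega>) \<partial>M1) = (\<integral>\<omega>. (1 + sin (V2 \<omega>)) *\<^sub>R iexp (s * U2 \<omega>) \<partial>M2)"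
    unfolding ls1 ls2 by (simp only: eq[rule_format] simp_thms)
  have es: "(\<integral>\<omega>. (1 + sin (V1 \<omega>)) * indicator B (U1 \<omega>) \<partial>M1) = (\<integral>\<omega>. (1 + sin (V2 \<omega>)) * indicator B (U2 \<omega>) \<partial>M2)"
    by (rule fourier_weighted_eq[OF fm1 fm2, where C=2 and wa="\<lambda>\<omega>. 1 + sin (V1 \<omega>)" and wb="\<lambda>\<omega>. 1 + sin (V2 \<omega>)" and f="indicator B" and Ua=U1 and Ub=U2, OF _ _ _ _ _ _ hs])
       (auto simp: cpos)
  have bnd: "\<bar>(1 + c) * indicator B x\<bar> \<le> 2" if "\<bar>c\<bar> \<le> 1" for c :: real and x
    using that by (auto simp: indicator_def abs_le_iff)
  have bnd0: "\<bar>1 * indicator B x\<bar> \<le> (2::real)" for x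
    by (auto simp: indicator_def)
  have ic1: "integrable M1 (\<lambda>\<omega>. (1 + cos (V1 \<omega>)) * indicator B (U1 \<omega>))"
    by (rule ri1) (auto intro!: bnd)
  have is1: "integrable M1 (\<lambda>\<omega>. (1 + sin (V1 \<omega>)) * indicator B (U1 \<omega>))"
    by (rule ri1) (auto intro!: bnd)
  have i01: "integrable M1 (\<lambda>\<omega>. (1::real) * indicator B (U1 \<omega>))"
    by (rule ri1) (auto simp: indicator_def)
  have ic2: "integrable M2 (\<lambda>\<omega>. (1 + cos (V2 \<omega>)) * indicator B (U2 \<omega>))"
    by (rule ri2) (auto intro!: bnd)
  have is2: "integrable M2 (\<lambda>\<omega>. (1 + sin (V2 \<omega>)) * indicator B (U2 \<omega>))"
    by (rule ri2) (auto intro!: bnd)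
  have i02: "integrable M2 (\<lambda>\<omega>. (1::real) * indicator B (U2 \<omega>))"
    by (rule ri2) (auto simp: indicator_def)
  have pt: "indicator B u *\<^sub>R iexp v = complex_of_real ((1 + cos v) * indicator B u - 1 * indicator B u)
          + \<i> * complex_of_real ((1 + sin v) * indicator B u - 1 * indicator B u)" for u v
    by (auto simp: iexp_split scaleR_conv_of_real algebra_simps indicator_def)
  have split1: "(\<integral>\<omega>. indicator B (U1 \<omega>) *\<^sub>R iexp (V1 \<omega>) \<partial>M1) =
      complex_of_real ((\<integral>\<omega>. (1 + cos (V1 \<omega>)) * indicator B (U1 \<omega>) \<partial>M1) - (\<integral>\<omega>. 1 * indicator B (U1 \<omega>) \<partial>M1))
    + \<i> * complex_of_real ((\<integral>\<omega>. (1 + sin (V1 \<omega>)) * indicator B (U1 \<omega>) \<partial>M1) - (\<integral>\<omega>. 1 * indicator B (U1 \<omega>) \<partial>M1))"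
    unfolding pt
    apply (subst Bochner_Integration.integral_add)
      apply (rule integrable_of_real, rule Bochner_Integration.integrable_diff[OF ic1 i01])
     apply (rule integrable_mult_right, rule integrable_of_real, rule Bochner_Integration.integrable_diff[OF is1 i01])
    apply (simp only: integral_mult_right_zero integral_complex_of_real
      Bochner_Integration.integral_diff[OF ic1 i01] Bochner_Integration.integral_diff[OF is1 i01])
    done
  have split2: "(\<integral>\<omega>. indicator B (U2 \<omega>) *\<^sub>R iexp (V2 \<omega>) \<partial>M2) =
      complex_of_real ((\<integral>\<omega>. (1 + cos (V2 \<omega>)) * indicator B (U2 \<omega>) \<partial>M2) - (\<integral>\<omega>. 1 * indicator B (U2 \<omega>) \<partial>M2))
    + \<i> * complex_of_real ((\<integral>\<omega>. (1 + sin (V2 \<omega>)) * indicator B (U2 \<omega>) \<partial>M2) - (\<integral>\<omega>. 1 * indicator B (U2 \<omega>) \<partial>M2))"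
    unfolding pt
    apply (subst Bochner_Integration.integral_add)
      apply (rule integrable_of_real, rule Bochner_Integration.integrable_diff[OF ic2 i02])
     apply (rule integrable_mult_right, rule integrable_of_real, rule Bochner_Integration.integrable_diff[OF is2 i02])
    apply (simp only: integral_mult_right_zero integral_complex_of_real
      Bochner_Integration.integral_diff[OF ic2 i02] Bochner_Integration.integral_diff[OF is2 i02])
    done
  show ?thesis unfolding split1 split2 e0 ec es ..
qed

lemma cw_rect:
  fixes S :: "'p set"
  assumes "finite S"
  shows "\<And>(M1::'a measure) (M2::'b measure) X Y I. finite_measure M1 \<Longrightarrow> finite_measure M2 \<Longrightarrow>
     (\<forall>\<pi>\<in>S. X \<pi> \<in> borel_measurable M1) \<Longrightarrow> (\<forall>\<pi>\<in>S. Y \<pi> \<in> borel_measurable M2) \<Longrightarrow>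
     (\<forall>a. (\<integral>\<omega>. iexp (\<Sum>\<pi>\<in>S. a \<pi> * X \<pi> \<omega>) \<partial>M1) = (\<integral>\<omega>. iexp (\<Sum>\<pi>\<in>S. a \<pi> * Y \<pi> \<omega>) \<partial>M2)) \<Longrightarrow>
     (\<forall>\<pi>\<in>S. I \<pi> \<in> sets borel) \<Longrightarrow>
     measure M1 {\<omega>\<in>space M1. \<forall>\<pi>\<in>S. X \<pi> \<omega> \<in> I \<pi>} = measure M2 {\<omega>\<in>space M2. \<forall>\<pi>\<in>S. Y \<pi> \<omega> \<in> I \<pi>}"
  using assms
proof (induction S rule: finite_induct)
  case empty
  have "complex_of_real (measure M1 (space M1)) = complex_of_real (measure M2 (space M2))"
    using empty(5) by simp
  then show ?case by simp
next
  case (insert p S)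
  note fm1 = insert.prems(1) and fm2 = insert.prems(2)
  have Xm[measurable]: "X \<pi> \<in> borel_measurable M1" if "\<pi> \<in> insert p S" for \<pi> using insert.prems(3) that by auto
  have Ym[measurable]: "Y \<pi> \<in> borel_measurable M2" if "\<pi> \<in> insert p S" for \<pi> using insert.prems(4) that by auto
  have Im[measurable]: "I \<pi> \<in> sets borel" if "\<pi> \<in> insert p S" for \<pi> using insert.prems(6) that by auto
  note eq = insert.prems(5)
  define A1 where "A1 = {\<omega>\<in>space M1. X p \<omega> \<in> I p}"
  define A2 where "A2 = {\<omega>\<in>space M2. Y p \<omega> \<in> I p}"
  have A1s: "A1 \<in> sets M1" unfolding A1_def by measurable
  have A2s: "A2 \<in> sets M2" unfolding A2_def by measurable
  have A1s': "A1 \<inter> space M1 \<in> sets M1" using A1s by (simp add: A1_def)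
  have A2s': "A2 \<inter> space M2 \<in> sets M2" using A2s by (simp add: A2_def)
  define R1 where "R1 = restrict_space M1 A1"
  define R2 where "R2 = restrict_space M2 A2"
  have fR1: "finite_measure R1" unfolding R1_def by (rule finite_measure_restrict_space[OF fm1 A1s])
  have fR2: "finite_measure R2" unfolding R2_def by (rule finite_measure_restrict_space[OF fm2 A2s])
  have XR: "\<forall>\<pi>\<in>S. X \<pi> \<in> borel_measurable R1"
    unfolding R1_def by (auto intro!: measurable_restrict_space1)
  have YR: "\<forall>\<pi>\<in>S. Y \<pi> \<in> borel_measurable R2"
    unfolding R2_def by (auto intro!: measurable_restrict_space1)
  have hypR: "\<forall>a. (\<integral>\<omega>. iexp (\<Sum>\<pi>\<in>S. a \<pi> * X \<pi> \<omega>) \<partial>R1) = (\<integral>\<omega>. iexp (\<Sum>\<pi>\<in>S. a \<pi> * Y \<pi> \<omega>) \<partial>R2)"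
  proof
    fix a :: "'p \<Rightarrow> real"
    have st: "\<forall>s t. (\<integral>\<omega>. iexp (s * X p \<omega> + t * (\<Sum>\<pi>\<in>S. a \<pi> * X \<pi> \<omega>)) \<partial>M1) =
                    (\<integral>\<omega>. iexp (s * Y p \<omega> + t * (\<Sum>\<pi>\<in>S. a \<pi> * Y \<pi> \<omega>)) \<partial>M2)"
    proof (intro allI)
      fix s t
      define a' where "a' = (\<lambda>\<pi>. t * a \<pi>)(p := s)"
      have sX: "(\<Sum>\<pi>\<in>insert p S. a' \<pi> * Z \<pi> \<omega>) = s * Z p \<omega> + t * (\<Sum>\<pi>\<in>S. a \<pi> * Z \<pi> \<omega>)" for Z :: "'p \<Rightarrow> 'c \<Rightarrow> real" and \<omega>
      proof -
        have "(\<Sum>\<pi>\<in>S. a' \<pi> * Z \<pi> \<omega>) = (\<Sum>\<pi>\<in>S. t * (a \<pi> * Z \<pi> \<omega>))"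
          using insert.hyps(2) by (intro sum.cong) (auto simp: a'_def)
        then show ?thesis using insert.hyps by (simp add: a'_def sum_distrib_left)
      qed
      show "(\<integral>\<omega>. iexp (s * X p \<omega> + t * (\<Sum>\<pi>\<in>S. a \<pi> * X \<pi> \<omega>)) \<partial>M1) =
                    (\<integral>\<omega>. iexp (s * Y p \<omega> + t * (\<Sum>\<pi>\<in>S. a \<pi> * Y \<pi> \<omega>)) \<partial>M2)"
        using eq[rule_format, of a'] unfolding sX .
    qed
    have "(\<integral>\<omega>. iexp (\<Sum>\<pi>\<in>S. a \<pi> * X \<pi> \<omega>) \<partial>R1) = (\<integral>\<omega>. indicator A1 \<omega> *\<^sub>R iexp (\<Sum>\<pi>\<in>S. a \<pi> * X \<pi> \<omega>) \<partial>M1)"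
      unfolding R1_def by (rule integral_restrict_space[OF A1s'])
    also have "\<dots> = (\<integral>\<omega>. indicator (I p) (X p \<omega>) *\<^sub>R iexp (\<Sum>\<pi>\<in>S. a \<pi> * X \<pi> \<omega>) \<partial>M1)"
      by (intro Bochner_Integration.integral_cong) (auto simp: A1_def indicator_def)
    also have "\<dots> = (\<integral>\<omega>. indicator (I p) (Y p \<omega>) *\<^sub>R iexp (\<Sum>\<pi>\<in>S. a \<pi> * Y \<pi> \<omega>) \<partial>M2)"
      by (rule fourier_pair_eq[OF fm1 fm2 _ _ _ _ st]) auto
    also have "\<dots> = (\<integral>\<omega>. indicator A2 \<omega> *\<^sub>R iexp (\<Sum>\<pi>\<in>S. a \<pi> * Y \<pi> \<omega>) \<partial>M2)"
      by (intro Bochner_Integration.integral_cong) (auto simp: A2_def indicator_def)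
    also have "\<dots> = (\<integral>\<omega>. iexp (\<Sum>\<pi>\<in>S. a \<pi> * Y \<pi> \<omega>) \<partial>R2)"
      unfolding R2_def by (rule integral_restrict_space[OF A2s', symmetric])
    finally show "(\<integral>\<omega>. iexp (\<Sum>\<pi>\<in>S. a \<pi> * X \<pi> \<omega>) \<partial>R1) = (\<integral>\<omega>. iexp (\<Sum>\<pi>\<in>S. a \<pi> * Y \<pi> \<omega>) \<partial>R2)" .
  qed
  have IS: "\<forall>\<pi>\<in>S. I \<pi> \<in> sets borel" using insert.prems(6) by auto
  have ih: "measure R1 {\<omega>\<in>space R1. \<forall>\<pi>\<in>S. X \<pi> \<omega> \<in> I \<pi>} = measure R2 {\<omega>\<in>space R2. \<forall>\<pi>\<in>S. Y \<pi> \<omega> \<in> I \<pi>}"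
    by (rule insert.IH[OF fR1 fR2 XR YR hypR IS])
  have sp1: "space R1 = A1" unfolding R1_def using A1_def by (auto simp: space_restrict_space)
  have sp2: "space R2 = A2" unfolding R2_def using A2_def by (auto simp: space_restrict_space)
  have "measure R1 {\<omega>\<in>space R1. \<forall>\<pi>\<in>S. X \<pi> \<omega> \<in> I \<pi>} = measure M1 {\<omega>\<in>space M1. \<forall>\<pi>\<in>insert p S. X \<pi> \<omega> \<in> I \<pi>}"
    unfolding R1_def sp1[unfolded R1_def] by (subst measure_restrict_space[OF A1s']) (auto simp: A1_def intro!: arg_cong[where f="measure M1"])
  moreover have "measure R2 {\<omega>\<in>space R2. \<forall>\<pi>\<in>S. Y \<pi> \<omega> \<in> I \<pi>} = measure M2 {\<omega>\<in>space M2. \<forall>\<pi>\<in>insert p S. Y \<pi> \<omega> \<in> I \<pi>}"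
    unfolding R2_def sp2[unfolded R2_def] by (subst measure_restrict_space[OF A2s']) (auto simp: A2_def intro!: arg_cong[where f="measure M2"])
  ultimately show ?case using ih by simp
qed

lemma gauss_sin_zero:
  assumes N: "prob_space N" and G: "real_gaussian N W" and iW: "integrable N W" and mW: "integral\<^sup>L N W = 0"
  shows "(\<integral>\<omega>. sin (W \<omega>) \<partial>N) = 0"
proof -
  have Wm[measurable]: "W \<in> borel_measurable N" using G unfolding real_gaussian_def by simp
  from G consider (nd) \<mu> \<sigma> where "\<sigma> > 0" "distributed N lborel W (normal_density \<mu> \<sigma>)"
    | (c) c where "AE x in N. W x = c"
    unfolding real_gaussian_def by blast
  then show ?thesis
  proof cases
    case nd
    have "prob_space.expectation N W = \<mu>"
      by (rule prob_space.normal_distributed_expectation[OF N nd])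
    hence \<mu>0: "\<mu> = 0" using mW by simp
    have "(\<integral>\<omega>. sin (W \<omega>) \<partial>N) = (\<integral>x. normal_density 0 \<sigma> x * sin x \<partial>lborel)"
      using distributed_integral[OF nd(2)[unfolded \<mu>0], of sin] by simp
    also have "(\<integral>x. normal_density 0 \<sigma> x * sin x \<partial>lborel) = 0"
    proof -
      define f where "f x = normal_density 0 \<sigma> x * sin x" for x
      have fm: "f (0 + (-1) * x) = - f x" for x
        by (simp add: f_def normal_density_def)
      have "(\<integral>x. f x \<partial>lborel) = \<bar>-1\<bar> *\<^sub>R (\<integral>x. f (0 + (-1) * x) \<partial>lborel)"
        by (rule lborel_integral_real_affine) simp
      also have "\<dots> = - (\<integral>x. f x \<partial>lborel)" unfolding fm by simp
      finally show ?thesis unfolding f_def by simp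
    qed
    finally show ?thesis .
  next
    case c
    have "integral\<^sup>L N W = integral\<^sup>L N (\<lambda>_. c)"
      by (rule integral_cong_AE) (use c in auto)
    also have "\<dots> = c" using prob_space.prob_space[OF N] by simp
    finally have "c = 0" using mW by simp
    hence "AE x in N. sin (W x) = 0" using c by auto
    hence "(\<integral>\<omega>. sin (W \<omega>) \<partial>N) = (\<integral>\<omega>. 0 \<partial>N)"
      by (intro integral_cong_AE) auto
    then show ?thesis by simp
  qed
qed

lemma gauss_iexp_sym:
  assumes N: "prob_space N" and G: "real_gaussian N W" and iW: "integrable N W" and mW: "integral\<^sup>L N W = 0"
  shows "(\<integral>\<omega>. iexp (- W \<omega>) \<partial>N) = (\<integral>\<omega>. iexp (W \<omega>) \<partial>N)"
proof -
  have Wm[measurable]: "W \<in> borel_measurable N" using G unfolding real_gaussian_def by simp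
  have fm: "finite_measure N" using N unfolding prob_space_def by simp
  have ri: "integrable N h" if "h \<in> borel_measurable N" "\<forall>\<omega>. norm (h \<omega>) \<le> 1" for h :: "'a \<Rightarrow> real"
    using that by (intro finite_measure.integrable_const_bound[OF fm, where B=1]) auto
  have ic: "integrable N (\<lambda>\<omega>. cos (W \<omega>))" by (rule ri) auto
  have isn: "integrable N (\<lambda>\<omega>. sin (W \<omega>))" by (rule ri) auto
  have s0: "(\<integral>\<omega>. sin (W \<omega>) \<partial>N) = 0" by (rule gauss_sin_zero[OF assms])
  have "(\<integral>\<omega>. iexp (W \<omega>) \<partial>N) = (\<integral>\<omega>. complex_of_real (cos (W \<omega>)) + \<i> * complex_of_real (sin (W \<omega>)) \<partial>N)"
    by (simp only: iexp_split)
  also have "\<dots> = complex_of_real (\<integral>\<omega>. cos (W \<omega>) \<partial>N) + \<i> * complex_of_real (\<integral>\<omega>. sin (W \<omega>) \<partial>N)"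
    by (subst Bochner_Integration.integral_add)
      (auto intro!: integrable_of_real ic isn integrable_mult_right)
  finally have a: "(\<integral>\<omega>. iexp (W \<omega>) \<partial>N) = complex_of_real (\<integral>\<omega>. cos (W \<omega>) \<partial>N)" using s0 by simp
  have "(\<integral>\<omega>. iexp (- W \<omega>) \<partial>N) = (\<integral>\<omega>. complex_of_real (cos (W \<omega>)) - \<i> * complex_of_real (sin (W \<omega>)) \<partial>N)"
    by (subst iexp_split) simp
  also have "\<dots> = complex_of_real (\<integral>\<omega>. cos (W \<omega>) \<partial>N) - \<i> * complex_of_real (\<integral>\<omega>. sin (W \<omega>) \<partial>N)"
    by (subst Bochner_Integration.integral_diff)
      (auto intro!: integrable_of_real ic isn integrable_mult_right)
  finally have b: "(\<integral>\<omega>. iexp (- W \<omega>) \<partial>N) = complex_of_real (\<integral>\<omega>. cos (W \<omega>) \<partial>N)" using s0 by simp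
  show ?thesis using a b by simp
qed

lemma gauss_vector_sym:
  assumes N: "prob_space N" and Zg: "centered_unit_gaussian_vector N P Z" and P: "finite P"
    and K: "K \<subseteq> P" and I: "\<forall>\<pi>\<in>K. I \<pi> \<in> sets borel"
  shows "measure N {\<omega>\<in>space N. \<forall>\<pi>\<in>K. - Z \<pi> \<omega> \<in> I \<pi>} = measure N {\<omega>\<in>space N. \<forall>\<pi>\<in>K. Z \<pi> \<omega> \<in> I \<pi>}"
proof -
  have fm: "finite_measure N" using N unfolding prob_space_def by simp
  have Zm: "\<forall>\<pi>\<in>P. Z \<pi> \<in> borel_measurable N" and Zlin: "\<forall>a. real_gaussian N (\<lambda>\<omega>. \<Sum>\<pi>\<in>P. a \<pi> * Z \<pi> \<omega>)"
    and Zi: "\<forall>\<pi>\<in>P. integrable N (Z \<pi>) \<and> integral\<^sup>L N (Z \<pi>) = 0"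
    using Zg unfolding centered_unit_gaussian_vector_def by auto
  have fK: "finite K" using K P finite_subset by auto
  show ?thesis
  proof (rule cw_rect[OF fK fm fm])
    show "\<forall>\<pi>\<in>K. (\<lambda>\<omega>. - Z \<pi> \<omega>) \<in> borel_measurable N" using Zm K by auto
    show "\<forall>\<pi>\<in>K. Z \<pi> \<in> borel_measurable N" using Zm K by auto
    show "\<forall>\<pi>\<in>K. I \<pi> \<in> sets borel" by (rule I)
    show "\<forall>a. (\<integral>\<omega>. iexp (\<Sum>\<pi>\<in>K. a \<pi> * - Z \<pi> \<omega>) \<partial>N) = (\<integral>\<omega>. iexp (\<Sum>\<pi>\<in>K. a \<pi> * Z \<pi> \<omega>) \<partial>N)"
    proof
      fix a :: "'b \<Rightarrow> real"
      define a' where "a' \<pi> = (if \<pi> \<in> K then a \<pi> else 0)" for \<pi>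
      define W where "W \<omega> = (\<Sum>\<pi>\<in>K. a \<pi> * Z \<pi> \<omega>)" for \<omega>
      have W': "W = (\<lambda>\<omega>. \<Sum>\<pi>\<in>P. a' \<pi> * Z \<pi> \<omega>)"
      proof
        fix \<omega>
        have "(\<Sum>\<pi>\<in>P. a' \<pi> * Z \<pi> \<omega>) = (\<Sum>\<pi>\<in>K. a' \<pi> * Z \<pi> \<omega>)"
          using K P by (intro sum.mono_neutral_right) (auto simp: a'_def)
        also have "\<dots> = W \<omega>" unfolding W_def by (intro sum.cong) (auto simp: a'_def)
        finally show "W \<omega> = (\<Sum>\<pi>\<in>P. a' \<pi> * Z \<pi> \<omega>)" by simp
      qed
      have G: "real_gaussian N W" unfolding W' using Zlin by simp
      have iW: "integrable N W" unfolding W_def using Zi K by (auto intro!: Bochner_Integration.integrable_sum)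
      have mW: "integral\<^sup>L N W = 0" unfolding W_def using Zi K
        by (subst Bochner_Integration.integral_sum) (auto intro!: sum.neutral)
      have "(\<integral>\<omega>. iexp (\<Sum>\<pi>\<in>K. a \<pi> * - Z \<pi> \<omega>) \<partial>N) = (\<integral>\<omega>. iexp (- W \<omega>) \<partial>N)"
        unfolding W_def by (simp add: sum_negf)
      also have "\<dots> = (\<integral>\<omega>. iexp (W \<omega>) \<partial>N)" by (rule gauss_iexp_sym[OF N G iW mW])
      finally show "(\<integral>\<omega>. iexp (\<Sum>\<pi>\<in>K. a \<pi> * - Z \<pi> \<omega>) \<partial>N) = (\<integral>\<omega>. iexp (\<Sum>\<pi>\<in>K. a \<pi> * Z \<pi> \<omega>) \<partial>N)"
        unfolding W_def .
    qed
  qed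
qed

lemma quantile_prop:
  assumes N: "prob_space N" and Xm[measurable]: "X \<in> borel_measurable N" and t0: "0 < \<tau>" and t1: "\<tau> < 1"
  shows "\<tau> \<le> measure N {\<omega>\<in>space N. X \<omega> \<le> quantile N X \<tau>}"
proof -
  define \<mu> where "\<mu> = distr N borel X"
  have rd: "real_distribution \<mu>" unfolding \<mu>_def
    by (rule prob_space.real_distribution_distr[OF N]) simp
  have fb: "finite_borel_measure \<mu>" by (rule real_distribution.finite_borel_measure_M[OF rd])
  define F where "F = cdf \<mu>"
  have Fe: "F x = measure N {\<omega>\<in>space N. X \<omega> \<le> x}" for x
    unfolding F_def cdf_def \<mu>_def
    by (subst measure_distr) (auto intro!: arg_cong[where f="measure N"])
  define S where "S = {x. \<tau> \<le> F x}"
  have q: "quantile N X \<tau> = Inf S" unfolding quantile_def S_def Fe ..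
  have mono: "F x \<le> F y" if "x \<le> y" for x y
    unfolding F_def using finite_borel_measure.cdf_nondecreasing[OF fb that] .
  have "eventually (\<lambda>x. F x > \<tau>) at_top"
    using order_tendstoD(1)[OF real_distribution.cdf_lim_at_top_prob[OF rd] t1] unfolding F_def .
  then obtain x0 where "\<forall>x\<ge>x0. F x > \<tau>" by (auto simp: eventually_at_top_linorder)
  hence Sne: "S \<noteq> {}" unfolding S_def by (auto intro!: exI[of _ x0] less_imp_le)
  have "eventually (\<lambda>x. F x < \<tau>) at_bot"
    using order_tendstoD(2)[OF finite_borel_measure.cdf_lim_at_bot[OF fb] t0] unfolding F_def .
  then obtain b where b: "\<forall>x\<le>b. F x < \<tau>" by (auto simp: eventually_at_bot_linorder)
  have bdd: "bdd_below S"
    unfolding bdd_below_def S_def using b by (auto intro!: exI[of _ b]) (meson linorder_not_le not_less order_less_imp_le)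
  have ev: "eventually (\<lambda>x. \<tau> \<le> F x) (at_right (Inf S))"
  proof -
    have "eventually (\<lambda>x. Inf S < x) (at_right (Inf S))" by (rule eventually_at_right_less)
    then show ?thesis
    proof (rule eventually_mono)
      fix x assume "Inf S < x"
      then obtain y where "y \<in> S" "y < x" using cInf_less_iff[OF Sne bdd] by auto
      then show "\<tau> \<le> F x" using mono[of y x] unfolding S_def by auto
    qed
  qed
  have "(F \<longlongrightarrow> F (Inf S)) (at_right (Inf S))"
    using finite_borel_measure.cdf_is_right_cont[OF fb, of "Inf S"] unfolding F_def continuous_within .
  hence "\<tau> \<le> F (Inf S)"
    by (rule tendsto_lowerbound) (use ev in auto)
  then show ?thesis using Fe q by simp
qed

theorem proposition1:
  fixes M :: "'a measure" and N :: "'b measure"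
    and P :: "'p set" and n :: nat and V :: "'p \<Rightarrow> real"
    and Vhat shat :: "'p \<Rightarrow> 'a \<Rightarrow> real" and Z :: "'p \<Rightarrow> 'b \<Rightarrow> real"
    and r \<beta> :: real and khat :: "'a \<Rightarrow> real" and pihat :: "'a \<Rightarrow> 'p"
  assumes M: "prob_space M" and N: "prob_space N"
    and P: "finite P" "P \<noteq> {}" and n: "n > 0"
    and Vhat_meas: "\<forall>\<pi>\<in>P. Vhat \<pi> \<in> borel_measurable M"
    and shat_meas: "\<forall>\<pi>\<in>P. shat \<pi> \<in> borel_measurable M"
    and shat_pos: "\<forall>\<pi>\<in>P. \<forall>\<omega>\<in>space M. shat \<pi> \<omega> > 0"
    and Zgauss: "centered_unit_gaussian_vector N P Z"
    and r: "r \<ge> 0"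
    and G: "condition_G M (\<lambda>\<pi> \<omega>. (Vhat \<pi> \<omega> - V \<pi>) / shat \<pi> \<omega>) N Z P r"
    and \<beta>: "0 < \<beta>" "\<beta> < 1"
    and khat: "\<forall>\<omega>\<in>space M. khat \<omega> \<ge> 0"
    and pihat_in: "\<forall>\<omega>\<in>space M. pihat \<omega> \<in> P"
    and pihat_argmax: "\<forall>\<omega>\<in>space M. \<forall>\<pi>\<in>P.
        Vhat \<pi> \<omega> - khat \<omega> * shat \<pi> \<omega> \<le> Vhat (pihat \<omega>) \<omega> - khat \<omega> * shat (pihat \<omega>) \<omega>"
  shows "\<exists>E\<in>sets M. measure M E \<ge> 1 - 2 * \<beta> - 2 * r \<and>
     (\<forall>\<omega>\<in>E.
        (let Vmax = Max (V ` P);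
             P0 = {\<pi>\<in>P. V \<pi> = Vmax};
             sig_bar = sqrt (real n) * Max ((\<lambda>\<pi>. shat \<pi> \<omega>) ` P);
             sig_low = sqrt (real n) * Min ((\<lambda>\<pi>. shat \<pi> \<omega>) ` P0)
         in Vmax - V (pihat \<omega>) \<le>
              sig_low / sqrt (real n) * (qmax N Z (1 - \<beta>) P0 + khat \<omega>)
              + sig_bar / sqrt (real n) * max (qmax N Z (1 - \<beta>) P - khat \<omega>) 0))"
proof -
  define Zh where "Zh \<pi> \<omega> = (Vhat \<pi> \<omega> - V \<pi>) / shat \<pi> \<omega>" for \<pi> \<omega>
  have Zhm[measurable]: "Zh \<pi> \<in> borel_measurable M" if "\<pi> \<in> P" for \<pi>
    unfolding Zh_def using Vhat_meas shat_meas that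
    by (intro borel_measurable_divide borel_measurable_diff) auto
  have Zm[measurable]: "Z \<pi> \<in> borel_measurable N" if "\<pi> \<in> P" for \<pi>
    using Zgauss that unfolding centered_unit_gaussian_vector_def by auto
  define Vmax where "Vmax = Max (V ` P)"
  define P0 where "P0 = {\<pi>\<in>P. V \<pi> = Vmax}"
  have P0P: "P0 \<subseteq> P" unfolding P0_def by auto
  have P0f: "finite P0" using P0P P(1) finite_subset by auto
  have P0ne: "P0 \<noteq> {}"
  proof -
    have "Vmax \<in> V ` P" unfolding Vmax_def using P by (intro Max_in) auto
    then show ?thesis unfolding P0_def by auto
  qed
  define q where "q = qmax N Z (1 - \<beta>) P"
  define q0 where "q0 = qmax N Z (1 - \<beta>) P0"
  have \<beta>': "0 < 1 - \<beta>" "1 - \<beta> < 1" using \<beta> by auto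
  have Gr: "measure N {\<omega>\<in>space N. \<forall>\<pi>\<in>P. Z \<pi> \<omega> \<in> I \<pi>} - r \<le> measure M {\<omega>\<in>space M. \<forall>\<pi>\<in>P. Zh \<pi> \<omega> \<in> I \<pi>}"
    if "\<forall>\<pi>\<in>P. is_interval (I \<pi>)" for I
    using G that unfolding condition_G_def Zh_def by (auto simp: abs_le_iff)
  have qmaxprop: "1 - \<beta> \<le> measure N {\<omega>\<in>space N. \<forall>\<pi>\<in>K. Z \<pi> \<omega> \<in> {..qmax N Z (1 - \<beta>) K}}"
    if K: "K \<subseteq> P" "K \<noteq> {}" for K
  proof -
    have Kf: "finite K" using K P(1) finite_subset by auto
    have Xm: "(\<lambda>\<omega>. Max ((\<lambda>\<pi>. Z \<pi> \<omega>) ` K)) \<in> borel_measurable N"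
      using Kf K by (intro borel_measurable_Max) auto
    have "1 - \<beta> \<le> measure N {\<omega>\<in>space N. Max ((\<lambda>\<pi>. Z \<pi> \<omega>) ` K) \<le> qmax N Z (1 - \<beta>) K}"
      unfolding qmax_def by (rule quantile_prop[OF N Xm \<beta>'])
    also have "{\<omega>\<in>space N. Max ((\<lambda>\<pi>. Z \<pi> \<omega>) ` K) \<le> qmax N Z (1 - \<beta>) K}
        = {\<omega>\<in>space N. \<forall>\<pi>\<in>K. Z \<pi> \<omega> \<in> {..qmax N Z (1 - \<beta>) K}}"
      using Kf K by auto
    finally show ?thesis .
  qed
  define E1 where "E1 = {\<omega>\<in>space M. \<forall>\<pi>\<in>P. Zh \<pi> \<omega> \<in> (if \<pi> \<in> P0 then {-q0..} else UNIV)}"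
  define E2 where "E2 = {\<omega>\<in>space M. \<forall>\<pi>\<in>P. Zh \<pi> \<omega> \<in> {..q}}"
  have E1s: "E1 \<in> sets M"
  proof -
    have "E1 = space M \<inter> (\<Inter>\<pi>\<in>P. {\<omega>\<in>space M. Zh \<pi> \<omega> \<in> (if \<pi> \<in> P0 then {-q0..} else UNIV)})"
      unfolding E1_def by blast
    also have "\<dots> \<in> sets M" using P by (intro sets.Int sets.finite_INT) auto
    finally show ?thesis .
  qed
  have E2s: "E2 \<in> sets M"
  proof -
    have "E2 = space M \<inter> (\<Inter>\<pi>\<in>P. {\<omega>\<in>space M. Zh \<pi> \<omega> \<in> {..q}})"
      unfolding E2_def by blast
    also have "\<dots> \<in> sets M" using P by (intro sets.Int sets.finite_INT) auto
    finally show ?thesis .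
  qed
  have m2: "1 - \<beta> - r \<le> measure M E2"
  proof -
    have "1 - \<beta> \<le> measure N {\<omega>\<in>space N. \<forall>\<pi>\<in>P. Z \<pi> \<omega> \<in> {..q}}"
      unfolding q_def using qmaxprop[of P] P by auto
    moreover have "measure N {\<omega>\<in>space N. \<forall>\<pi>\<in>P. Z \<pi> \<omega> \<in> {..q}} - r \<le> measure M E2"
      unfolding E2_def by (rule Gr) auto
    ultimately show ?thesis by linarith
  qed
  have m1: "1 - \<beta> - r \<le> measure M E1"
  proof -
    have "1 - \<beta> \<le> measure N {\<omega>\<in>space N. \<forall>\<pi>\<in>P0. Z \<pi> \<omega> \<in> {..q0}}"
      unfolding q0_def using qmaxprop[OF P0P P0ne] .
    also have "\<dots> = measure N {\<omega>\<in>space N. \<forall>\<pi>\<in>P0. - Z \<pi> \<omega> \<in> {..q0}}"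
      by (rule gauss_vector_sym[OF N Zgauss P(1) P0P, symmetric]) auto
    also have "{\<omega>\<in>space N. \<forall>\<pi>\<in>P0. - Z \<pi> \<omega> \<in> {..q0}} = {\<omega>\<in>space N. \<forall>\<pi>\<in>P. Z \<pi> \<omega> \<in> (if \<pi> \<in> P0 then {-q0..} else UNIV)}"
      using P0P by auto
    finally have a: "1 - \<beta> \<le> measure N {\<omega>\<in>space N. \<forall>\<pi>\<in>P. Z \<pi> \<omega> \<in> (if \<pi> \<in> P0 then {-q0..} else UNIV)}" .
    have "measure N {\<omega>\<in>space N. \<forall>\<pi>\<in>P. Z \<pi> \<omega> \<in> (if \<pi> \<in> P0 then {-q0..} else UNIV)} - r \<le> measure M E1"
      unfolding E1_def by (rule Gr) auto
    then show ?thesis using a by linarith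
  qed
  define E where "E = E1 \<inter> E2"
  have Es: "E \<in> sets M" unfolding E_def using E1s E2s by auto
  have mE: "1 - 2 * \<beta> - 2 * r \<le> measure M E"
  proof -
    have fm: "finite_measure M" using M unfolding prob_space_def by simp
    have "measure M (E1 \<union> E2) = measure M E1 + measure M E2 - measure M (E1 \<inter> E2)"
      using E1s E2s by (intro measure_Un3) (auto simp: finite_measure.fmeasurable_eq_sets[OF fm])
    moreover have "measure M (E1 \<union> E2) \<le> 1" using prob_space.prob_le_1[OF M] .
    ultimately show ?thesis using m1 m2 unfolding E_def by linarith
  qed
  show ?thesis
  proof (intro bexI[OF _ Es] conjI ballI)
    show "1 - 2 * \<beta> - 2 * r \<le> measure M E" by (rule mE)
    fix \<omega> assume \<omega>E: "\<omega> \<in> E"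
    have \<omega>: "\<omega> \<in> space M" using \<omega>E unfolding E_def E1_def by auto
    have z1: "- q0 \<le> Zh \<pi> \<omega>" if "\<pi> \<in> P0" for \<pi>
    proof -
      have "\<pi> \<in> P" using that P0P by auto
      then have "Zh \<pi> \<omega> \<in> (if \<pi> \<in> P0 then {-q0..} else UNIV)" using \<omega>E unfolding E_def E1_def by auto
      then show ?thesis using that by simp
    qed
    have z2: "Zh \<pi> \<omega> \<le> q" if "\<pi> \<in> P" for \<pi> using \<omega>E that unfolding E_def E2_def by auto
    define smin where "smin = Min ((\<lambda>\<pi>. shat \<pi> \<omega>) ` P0)"
    define smax where "smax = Max ((\<lambda>\<pi>. shat \<pi> \<omega>) ` P)"
    have "smin \<in> (\<lambda>\<pi>. shat \<pi> \<omega>) ` P0" unfolding smin_def using P0f P0ne by (intro Min_in) auto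
    then obtain ps where ps: "ps \<in> P0" "shat ps \<omega> = smin" by auto
    have psP: "ps \<in> P" using ps P0P by auto
    define ph where "ph = pihat \<omega>"
    define k where "k = khat \<omega>"
    have phP: "ph \<in> P" unfolding ph_def using pihat_in \<omega> by auto
    have k0: "0 \<le> k" unfolding k_def using khat \<omega> by auto
    have sps: "0 < shat ps \<omega>" using shat_pos psP \<omega> by auto
    have sph: "0 < shat ph \<omega>" using shat_pos phP \<omega> by auto
    have Vps: "V ps = Vmax" using ps unfolding P0_def by auto
    have h1: "- (shat ps \<omega> * q0) \<le> Vhat ps \<omega> - V ps"
      using z1[OF ps(1)] sps unfolding Zh_def by (simp add: pos_le_divide_eq mult.commute)
    have h2: "Vhat ph \<omega> - V ph \<le> shat ph \<omega> * q"
      using z2[OF phP] sph unfolding Zh_def by (simp add: pos_divide_le_eq mult.commute)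
    have h3: "Vhat ps \<omega> - shat ps \<omega> * k \<le> Vhat ph \<omega> - shat ph \<omega> * k"
      using pihat_argmax \<omega> psP unfolding ph_def k_def by (auto simp: mult.commute)
    have h4: "shat ph \<omega> \<le> smax" unfolding smax_def using P phP by (intro Max_ge) auto
    have h5: "shat ph \<omega> * (q - k) \<le> smax * max (q - k) 0"
    proof -
      have "shat ph \<omega> * (q - k) \<le> shat ph \<omega> * max (q - k) 0"
        using sph by (intro mult_left_mono) auto
      also have "\<dots> \<le> smax * max (q - k) 0"
        using h4 by (intro mult_right_mono) auto
      finally show ?thesis .
    qed
    have main: "Vmax - V ph \<le> smin * (q0 + k) + smax * max (q - k) 0"
    proof -
      have "Vmax - V ph \<le> shat ps \<omega> * q0 + shat ps \<omega> * k + (shat ph \<omega> * q - shat ph \<omega> * k)"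
        using h1 h2 h3 Vps by linarith
      also have "\<dots> = smin * (q0 + k) + shat ph \<omega> * (q - k)"
        using ps(2) by (simp add: algebra_simps)
      finally show ?thesis using h5 by linarith
    qed
    have sn: "sqrt (real n) > 0" using n by simp
    show "let Vmax = Max (V ` P);
             P0 = {\<pi>\<in>P. V \<pi> = Vmax};
             sig_bar = sqrt (real n) * Max ((\<lambda>\<pi>. shat \<pi> \<omega>) ` P);
             sig_low = sqrt (real n) * Min ((\<lambda>\<pi>. shat \<pi> \<omega>) ` P0)
         in Vmax - V (pihat \<omega>) \<le>
              sig_low / sqrt (real n) * (qmax N Z (1 - \<beta>) P0 + khat \<omega>)
              + sig_bar / sqrt (real n) * max (qmax N Z (1 - \<beta>) P - khat \<omega>) 0"
      unfolding Let_def Vmax_def[symmetric] P0_def[symmetric] smin_def[symmetric] smax_def[symmetric]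
        q_def[symmetric] q0_def[symmetric] ph_def[symmetric] k_def[symmetric]
      using main sn by simp
  qed
qed

end
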